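(* Let $I,J$ be positive integers and $\alpha_1,\alpha_2,\gamma_0,c_0>0$. For a truncation level $T\ge1$, consider the truncated DEPM: independently for $k=1,\dots,T$, $(\phi_{1,k},\dots,\phi_{I,k})\sim\mathrm{Dirichlet}(\alpha_1,\dots,\alpha_1)$, $(\psi_{1,k},\dots,\psi_{J,k})\sim\mathrm{Dirichlet}(\alpha_2,\dots,\alpha_2)$, $\lambda_k\sim\mathrm{Gamma}(\gamma_0/T,c_0)$ (shape, rate); given these, independently for each $(i,j)\in\{1,\dots,I\}\times\{1,\dots,J\}$, $m_{i,j,\cdot}\sim\mathrm{Poisson}\big(\sum_{k=1}^T\phi_{i,k}\psi_{j,k}\lambda_k\big)$, and given $m_{i,j,\cdot}$, the assignments $z_{i,j,1},\dots,z_{i,j,m_{i,j,\cdot}}\in\{1,\dots,T\}$ are i.i.d. with $P(z_{i,j,s}=k)\propto\phi_{i,k}\psi_{j,k}\lambda_k$. Let $P_T(\bm m,\bm z)$ denote the marginal probability of $\bm m=(m_{i,j,\cdot})$ and $\bm z=(z_{i,j,s})$ obtained by integrating out $\phi,\psi,\lambda$. Set $m_{i,j,k}=\#\{s:z_{i,j,s}=k\}$, $m_{i,\cdot,k}=\sum_jm_{i,j,k}$, $m_{\cdot,j,k}=\sum_im_{i,j,k}$, $m_{\cdot,\cdot,k}=\sum_i\sum_jm_{i,j,k}$, let $K_+$ be the number of labels $k$ with $m_{\cdot,\cdot,k}>0$, and let $[\bm z]$ denote the partition of the $M=\sum_{i,j}m_{i,j,\cdot}$ customers induced by $\bm z$ (so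 that $P_T(\bm m,[\bm z])=\frac{T!}{(T-K_+)!}P_T(\bm m,\bm z)$). Fix $\bm m$ and $\bm z$ (with labels in a fixed finite set, so $P_T$ is defined for all sufficiently large $T$), and index the $K_+$ occupied labels by $k=1,\dots,K_+$. Then $$\lim_{T\to\infty}\frac{T!}{(T-K_+)!}P_T(\bm m,\bm z)=\prod_{i=1}^I\prod_{j=1}^J\frac{1}{m_{i,j,\cdot}!}\times\prod_{k=1}^{K_+}\frac{\Gamma(I\alpha_1)}{\Gamma(I\alpha_1+m_{\cdot,\cdot,k})}\prod_{i=1}^I\frac{\Gamma(\alpha_1+m_{i,\cdot,k})}{\Gamma(\alpha_1)}\times\prod_{k=1}^{K_+}\frac{\Gamma(J\alpha_2)}{\Gamma(J\alpha_2+m_{\cdot,\cdot,k})}\prod_{j=1}^J\frac{\Gamma(\alpha_2+m_{\cdot,j,k})}{\Gamma(\alpha_2)}\times\gamma_0^{K_+}\Big(\frac{c_0}{c_0+1}\Big)^{\gamma_0}\prod_{k=1}^{K_+}\frac{\Gamma(m_{\cdot,\cdot,k})}{(c_0+1)^{m_{\cdot,\cdot,k}}},$$ where $\Gamma(\cdot)$ is the gamma function.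
   Context: $\mathrm{Gamma}(a,b)$ denotes the gamma distribution with shape $a$ and rate $b$. The limit is the marginal likelihood of the "truly infinite" DEPM (IDEPM). *)

theory Defs
  imports "HOL-Probability.Probability"
begin

text \<open>Indices are 0-based: i < I, j < J, labels k < T.
  A Dirichlet(a,...,a) vector on n coordinates is parametrised by its first n-1
  coordinates (Lebesgue density on the open simplex); the last one is 1 minus their sum.\<close>

definition dir_vec :: "nat \<Rightarrow> (nat \<Rightarrow> real) \<Rightarrow> nat \<Rightarrow> real" where
  "dir_vec n x i = (if i < n - 1 then x i else 1 - (\<Sum>l<n - 1. x l))"

definition dirichlet_density :: "nat \<Rightarrow> real \<Rightarrow> (nat \<Rightarrow> real) \<Rightarrow> real" where
  "dirichlet_density n a x =
     (if (\<forall>i<n - 1. 0 < x i) \<and> (\<Sum>l<n - 1. x l) < 1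
      then Gamma (real n * a) / Gamma a ^ n * (\<Prod>i<n. dir_vec n x i powr (a - 1))
      else 0)"

definition gamma_density :: "real \<Rightarrow> real \<Rightarrow> real \<Rightarrow> real" where
  "gamma_density a b x = (if 0 < x then b powr a / Gamma a * x powr (a - 1) * exp (- b * x) else 0)"

definition poisson_prob :: "real \<Rightarrow> nat \<Rightarrow> real" where
  "poisson_prob r n = exp (- r) * r ^ n / fact n"

definition depm_lik ::
  "nat \<Rightarrow> nat \<Rightarrow> nat \<Rightarrow> (nat \<Rightarrow> nat \<Rightarrow> nat) \<Rightarrow> (nat \<Rightarrow> nat \<Rightarrow> nat \<Rightarrow> nat)
   \<Rightarrow> (nat \<Rightarrow> nat \<Rightarrow> real) \<Rightarrow> (nat \<Rightarrow> nat \<Rightarrow> real) \<Rightarrow> (nat \<Rightarrow> real) \<Rightarrow> real" where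
  "depm_lik I J T m z phi psi lam =
     (let w = (\<lambda>i j k. dir_vec I (phi k) i * dir_vec J (psi k) j * lam k);
          r = (\<lambda>i j. \<Sum>k<T. w i j k)
      in \<Prod>i<I. \<Prod>j<J. poisson_prob (r i j) (m i j) * (\<Prod>s<m i j. w i j (z i j s) / r i j))"

definition depm_marginal ::
  "nat \<Rightarrow> nat \<Rightarrow> real \<Rightarrow> real \<Rightarrow> real \<Rightarrow> real \<Rightarrow> nat \<Rightarrow> (nat \<Rightarrow> nat \<Rightarrow> nat)
   \<Rightarrow> (nat \<Rightarrow> nat \<Rightarrow> nat \<Rightarrow> nat) \<Rightarrow> ennreal" where
  "depm_marginal I J a1 a2 g0 c0 T m z =
     (if \<forall>i<I. \<forall>j<J. \<forall>s<m i j. z i j s < T then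
       \<integral>\<^sup>+ phi. \<integral>\<^sup>+ psi. \<integral>\<^sup>+ lam.
          ennreal ((\<Prod>k<T. dirichlet_density I a1 (phi k)) *
                   (\<Prod>k<T. dirichlet_density J a2 (psi k)) *
                   (\<Prod>k<T. gamma_density (g0 / real T) c0 (lam k)) *
                   depm_lik I J T m z phi psi lam)
        \<partial>(PiM {..<T} (\<lambda>_. lborel))
        \<partial>(PiM {..<T} (\<lambda>_. PiM {..<J - 1} (\<lambda>_. lborel)))
        \<partial>(PiM {..<T} (\<lambda>_. PiM {..<I - 1} (\<lambda>_. lborel)))
      else 0)"

definition cnt :: "(nat \<Rightarrow> nat \<Rightarrow> nat) \<Rightarrow> (nat \<Rightarrow> nat \<Rightarrow> nat \<Rightarrow> nat) \<Rightarrow> nat \<Rightarrow> nat \<Rightarrow> nat \<Rightarrow> nat" where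
  "cnt m z i j k = card {s. s < m i j \<and> z i j s = k}"

definition occupied :: "nat \<Rightarrow> nat \<Rightarrow> (nat \<Rightarrow> nat \<Rightarrow> nat) \<Rightarrow> (nat \<Rightarrow> nat \<Rightarrow> nat \<Rightarrow> nat) \<Rightarrow> nat set" where
  "occupied I J m z = {k. \<exists>i<I. \<exists>j<J. \<exists>s<m i j. z i j s = k}"

end

theory Submission
  imports Defs
begin

lemma beta_scaled:
  fixes p q u :: real
  assumes p: "0 < p" and q: "0 < q" and u: "0 < u"
  shows "(\<integral>\<^sup>+y. ennreal (indicator {0<..<u} y * (y powr (p-1) * (u-y) powr (q-1))) \<partial>lborel)
          = ennreal (Beta p q * u powr (p+q-1))"
proof -
  have B: "(\<integral>\<^sup>+t. ennreal (indicator {0..1} t * (t powr (p-1) * (1-t) powr (q-1))) \<partial>lborel) = ennreal (Beta p q)"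
    by (rule nn_integral_has_integral_lebesgue[OF _ has_integral_Beta_real[OF p q]]) auto
  have "(\<integral>\<^sup>+y. ennreal (indicator {0<..<u} y * (y powr (p-1) * (u-y) powr (q-1))) \<partial>lborel)
      = \<bar>u\<bar> * (\<integral>\<^sup>+x. ennreal (indicator {0<..<u} (0 + u*x) * ((0 + u*x) powr (p-1) * (u-(0 + u*x)) powr (q-1))) \<partial>lborel)"
    by (rule nn_integral_real_affine) (use u in auto)
  also have "\<dots> = u * (\<integral>\<^sup>+x. ennreal (u powr (p+q-2)) * ennreal (indicator {0..1} x * (x powr (p-1) * (1-x) powr (q-1))) \<partial>lborel)"
  proof -
    have "ennreal (indicator {0<..<u} (0 + u*x) * ((0 + u*x) powr (p-1) * (u-(0 + u*x)) powr (q-1)))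
        = ennreal (u powr (p+q-2)) * ennreal (indicator {0..1} x * (x powr (p-1) * (1-x) powr (q-1)))" for x
    proof (cases "0 < x \<and> x < 1")
      case True
      have "(u*x) powr (p-1) * (u - u*x) powr (q-1) = u powr (p+q-2) * (x powr (p-1) * (1-x) powr (q-1))"
      proof -
        have "(u - u*x) = u * (1-x)" by (simp add: algebra_simps)
        then show ?thesis using True u
          by (simp add: powr_mult powr_add[symmetric] mult_ac diff_add_eq)
      qed
      then show ?thesis using True u
        by (simp add: indicator_def ennreal_mult[symmetric])
    next
      case False
      then have "x \<le> 0 \<or> 1 \<le> x" by auto
      then show ?thesis using u
        by (auto simp: indicator_def mult_pos_pos zero_less_mult_iff)
    qed
    then show ?thesis using u by simp
  qed
  also have "\<dots> = u * (ennreal (u powr (p+q-2)) * ennreal (Beta p q))"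
    by (subst nn_integral_cmult) (simp_all add: B)
  also have "\<dots> = ennreal (Beta p q * u powr (p+q-1))"
  proof -
    have "u * u powr (p+q-2) = u powr (p+q-1)" using u
      by (simp add: powr_add[symmetric] powr_mult_base)
    moreover have "Beta p q \<ge> 0" using p q by (simp add: Beta_def)
    ultimately show ?thesis using u
      by (simp add: ennreal_mult[symmetric] mult_ac)
  qed
  finally show ?thesis .
qed

definition spx :: "nat \<Rightarrow> real \<Rightarrow> (nat \<Rightarrow> real) set" where
  "spx n s = {x. (\<forall>i<n. 0 < x i) \<and> (\<Sum>i<n. x i) < s}"

lemma spx_meas[measurable]: "(\<lambda>x. indicator (spx n s) x :: real) \<in> borel_measurable (PiM {..<n} (\<lambda>_. lborel))"
proof -
  have "(\<lambda>x. indicator {x\<in>space (PiM {..<n} (\<lambda>_. lborel)). (\<forall>i\<in>{..<n}. 0 < x i) \<and> (\<Sum>i<n. x i) < s} x :: real) \<in> borel_measurable (PiM {..<n} (\<lambda>_. lborel))"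
    by measurable
  then show ?thesis
    by (rule measurable_cong[THEN iffD1, rotated]) (auto simp: spx_def indicator_def)
qed

lemma
 "(\<lambda>x. ennreal (indicator (spx n s) x * ((\<Prod>i<n. x i powr (b i - 1)) * (s - (\<Sum>i<n. x i)) powr (c - 1))))
   \<in> borel_measurable (PiM {..<n} (\<lambda>_. lborel))"
  by measurable

lemma psf_lborel: "product_sigma_finite (\<lambda>_::nat. lborel::real measure)"
  by (simp add: product_sigma_finite_def lborel.sigma_finite_measure_axioms)

lemma Beta_nonneg: "0 < p \<Longrightarrow> 0 < q \<Longrightarrow> 0 \<le> Beta p (q::real)"
  unfolding Beta_def by (intro divide_nonneg_nonneg mult_nonneg_nonneg less_imp_le Gamma_real_pos) auto

lemma dirichlet_gen:
  fixes b :: "nat \<Rightarrow> real" and c s :: real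
  assumes "\<forall>i<n. 0 < b i" "0 < c" "0 < s"
  shows "(\<integral>\<^sup>+x. ennreal (indicator (spx n s) x * ((\<Prod>i<n. x i powr (b i - 1)) * (s - (\<Sum>i<n. x i)) powr (c - 1))) \<partial>PiM {..<n} (\<lambda>_. lborel))
     = ennreal ((\<Prod>i<n. Gamma (b i)) * Gamma c / Gamma ((\<Sum>i<n. b i) + c) * s powr ((\<Sum>i<n. b i) + c - 1))"
  using assms
proof (induction n arbitrary: c s)
  case 0
  have G: "Gamma c \<noteq> 0" using "0"(2) Gamma_real_pos[of c] by linarith
  show ?case using 0 G
    by (simp add: PiM_empty nn_integral_count_space_finite spx_def)
next
  case (Suc n)
  interpret product_sigma_finite "\<lambda>_::nat. lborel::real measure" by (rule psf_lborel)
  have hbn: "0 < b n" using Suc by auto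
  let ?F = "\<lambda>c s x. ennreal (indicator (spx n s) x * ((\<Prod>i<n. x i powr (b i - 1)) * (s - (\<Sum>i<n. x i)) powr (c - 1)))"
  have "(\<integral>\<^sup>+x. ennreal (indicator (spx (Suc n) s) x * ((\<Prod>i<Suc n. x i powr (b i - 1)) * (s - (\<Sum>i<Suc n. x i)) powr (c - 1))) \<partial>PiM {..<Suc n} (\<lambda>_. lborel))
     = (\<integral>\<^sup>+x. (\<integral>\<^sup>+y. ennreal (indicator (spx (Suc n) s) (x(n:=y)) * ((\<Prod>i<Suc n. (x(n:=y)) i powr (b i - 1)) * (s - (\<Sum>i<Suc n. (x(n:=y)) i)) powr (c - 1))) \<partial>lborel) \<partial>PiM {..<n} (\<lambda>_. lborel))"
    unfolding lessThan_Suc by (rule product_nn_integral_insert) (auto simp: lessThan_Suc[symmetric])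
  also have "\<dots> = (\<integral>\<^sup>+x. ennreal (Beta (b n) c) * ?F (b n + c) s x \<partial>PiM {..<n} (\<lambda>_. lborel))"
  proof (rule nn_integral_cong)
    fix x :: "nat \<Rightarrow> real"
    define u where "u = s - (\<Sum>i<n. x i)"
    have ind: "indicator (spx (Suc n) s) (x(n:=y)) = (indicator (spx n s) x * indicator {0<..<u} y :: real)" for y
      by (auto simp: spx_def indicator_def u_def less_Suc_eq)
    have pr: "(\<Prod>i<Suc n. (x(n:=y)) i powr (b i - 1)) = (\<Prod>i<n. x i powr (b i - 1)) * y powr (b n - 1)" for y
      by (simp add: prod.lessThan_Suc)
    have sm: "s - (\<Sum>i<Suc n. (x(n:=y)) i) = u - y" for y
      by (simp add: u_def)
    show "(\<integral>\<^sup>+y. ennreal (indicator (spx (Suc n) s) (x(n:=y)) * ((\<Prod>i<Suc n. (x(n:=y)) i powr (b i - 1)) * (s - (\<Sum>i<Suc n. (x(n:=y)) i)) powr (c - 1))) \<partial>lborel)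
        = ennreal (Beta (b n) c) * ?F (b n + c) s x"
    proof (cases "x \<in> spx n s")
      case False
      then show ?thesis unfolding ind by simp
    next
      case True
      then have u: "0 < u" by (simp add: spx_def u_def)
      have P: "(\<Prod>i<n. x i powr (b i - 1)) \<ge> 0" by (intro prod_nonneg) auto
      have "(\<integral>\<^sup>+y. ennreal (indicator (spx (Suc n) s) (x(n:=y)) * ((\<Prod>i<Suc n. (x(n:=y)) i powr (b i - 1)) * (s - (\<Sum>i<Suc n. (x(n:=y)) i)) powr (c - 1))) \<partial>lborel)
          = (\<integral>\<^sup>+y. ennreal (\<Prod>i<n. x i powr (b i - 1)) * ennreal (indicator {0<..<u} y * (y powr (b n - 1) * (u - y) powr (c - 1))) \<partial>lborel)"
        unfolding ind pr sm using True P
        by (intro nn_integral_cong) (simp add: ennreal_mult'[symmetric] mult_ac)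
      also have "\<dots> = ennreal (\<Prod>i<n. x i powr (b i - 1)) * ennreal (Beta (b n) c * u powr (b n + c - 1))"
        by (subst nn_integral_cmult) (simp_all add: beta_scaled[OF hbn Suc.prems(2) u])
      also have "\<dots> = ennreal (Beta (b n) c) * ?F (b n + c) s x"
      proof -
        have "0 \<le> Beta (b n) c" using hbn Suc.prems by (intro Beta_nonneg) auto
        then show ?thesis using True P
          by (simp add: u_def ennreal_mult'[symmetric] mult_ac)
      qed
      finally show ?thesis .
    qed
  qed
  also have "\<dots> = ennreal (Beta (b n) c) * (\<integral>\<^sup>+x. ?F (b n + c) s x \<partial>PiM {..<n} (\<lambda>_. lborel))"
    by (rule nn_integral_cmult) measurable
  also have "\<dots> = ennreal (Beta (b n) c) * ennreal ((\<Prod>i<n. Gamma (b i)) * Gamma (b n + c) / Gamma ((\<Sum>i<n. b i) + (b n + c)) * s powr ((\<Sum>i<n. b i) + (b n + c) - 1))"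
  proof -
    have "\<forall>i<n. 0 < b i" using Suc.prems by auto
    moreover have "0 < b n + c" using hbn Suc.prems by linarith
    ultimately show ?thesis using Suc.IH[of "b n + c" s] Suc.prems by simp
  qed
  also have "\<dots> = ennreal ((\<Prod>i<Suc n. Gamma (b i)) * Gamma c / Gamma ((\<Sum>i<Suc n. b i) + c) * s powr ((\<Sum>i<Suc n. b i) + c - 1))"
  proof -
    have bc: "0 < b n + c" using hbn Suc.prems by linarith
    have g1: "Gamma (b n + c) \<noteq> 0" using Gamma_real_pos[OF bc] by simp
    have "Beta (b n) c \<ge> 0" using hbn Suc.prems by (intro Beta_nonneg) auto
    then show ?thesis using g1
      by (simp add: ennreal_mult'[symmetric] Beta_def prod.lessThan_Suc sum.lessThan_Suc add.assoc field_simps)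
  qed
  finally show ?case .
qed

lemma powr_pow_combine: "0 < (x::real) \<Longrightarrow> x powr (a - 1) * x ^ k = x powr (a + real k - 1)"
  by (simp add: powr_realpow[symmetric] powr_add[symmetric] algebra_simps)

lemma dirichlet_moment:
  fixes a :: real and c :: "nat \<Rightarrow> nat"
  assumes n: "0 < n" and a: "0 < a"
  shows "(\<integral>\<^sup>+x. ennreal (dirichlet_density n a x * (\<Prod>i<n. dir_vec n x i ^ c i)) \<partial>PiM {..<n-1} (\<lambda>_. lborel))
       = ennreal (Gamma (real n * a) / Gamma (real n * a + real (\<Sum>i<n. c i)) * (\<Prod>i<n. Gamma (a + real (c i)) / Gamma a))"
proof -
  obtain p where np: "n = Suc p" using n by (cases n) auto
  define b where "b i = a + real (c i)" for i
  define K where "K = Gamma (real n * a) / Gamma a ^ n"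
  have Kpos: "0 \<le> K" unfolding K_def using a n by (intro divide_nonneg_nonneg) auto
  have bpos: "\<forall>i<p. 0 < b i" "0 < b p" using a by (auto simp: b_def add_pos_nonneg)
  have eq: "dirichlet_density n a x * (\<Prod>i<n. dir_vec n x i ^ c i)
       = K * (indicator (spx p 1) x * ((\<Prod>i<p. x i powr (b i - 1)) * (1 - (\<Sum>i<p. x i)) powr (b p - 1)))" for x
  proof (cases "x \<in> spx p 1")
    case False
    then show ?thesis unfolding dirichlet_density_def spx_def np by auto
  next
    case True
    have dv: "dir_vec n x i = (if i < p then x i else 1 - (\<Sum>l<p. x l))" for i
      by (simp add: dir_vec_def np)
    have pos: "\<forall>i<p. 0 < x i" "0 < 1 - (\<Sum>l<p. x l)" using True by (auto simp: spx_def)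
    have "(\<Prod>i<n. dir_vec n x i powr (a - 1)) * (\<Prod>i<n. dir_vec n x i ^ c i)
        = (\<Prod>i<n. dir_vec n x i powr (a - 1) * dir_vec n x i ^ c i)"
      by (simp add: prod.distrib)
    also have "\<dots> = (\<Prod>i<Suc p. (if i < p then x i else 1 - (\<Sum>l<p. x l)) powr (b i - 1))"
      unfolding np
    proof (rule prod.cong[OF refl])
      fix i assume "i \<in> {..<Suc p}"
      then have "0 < (if i < p then x i else 1 - (\<Sum>l<p. x l))" using pos by auto
      then show "dir_vec (Suc p) x i powr (a - 1) * dir_vec (Suc p) x i ^ c i = (if i < p then x i else 1 - (\<Sum>l<p. x l)) powr (b i - 1)"
        using dv[unfolded np] by (simp add: powr_pow_combine b_def)
    qed
    also have "\<dots> = (\<Prod>i<p. x i powr (b i - 1)) * (1 - (\<Sum>i<p. x i)) powr (b p - 1)"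
      by (simp add: prod.lessThan_Suc)
    finally show ?thesis using True
      by (simp add: dirichlet_density_def spx_def np K_def mult_ac)
  qed
  have "(\<integral>\<^sup>+x. ennreal (dirichlet_density n a x * (\<Prod>i<n. dir_vec n x i ^ c i)) \<partial>PiM {..<n-1} (\<lambda>_. lborel))
      = (\<integral>\<^sup>+x. ennreal K * ennreal (indicator (spx p 1) x * ((\<Prod>i<p. x i powr (b i - 1)) * (1 - (\<Sum>i<p. x i)) powr (b p - 1))) \<partial>PiM {..<p} (\<lambda>_. lborel))"
    unfolding eq using Kpos by (simp add: np ennreal_mult')
  also have "\<dots> = ennreal K * ennreal ((\<Prod>i<p. Gamma (b i)) * Gamma (b p) / Gamma ((\<Sum>i<p. b i) + b p) * 1 powr ((\<Sum>i<p. b i) + b p - 1))"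
    by (subst nn_integral_cmult) (measurable, simp add: dirichlet_gen[OF bpos])
  also have "\<dots> = ennreal (Gamma (real n * a) / Gamma (real n * a + real (\<Sum>i<n. c i)) * (\<Prod>i<n. Gamma (a + real (c i)) / Gamma a))"
  proof -
    have s: "(\<Sum>i<p. b i) + b p = real n * a + real (\<Sum>i<n. c i)"
      by (simp add: np b_def sum.distrib sum.lessThan_Suc algebra_simps)
    have pr: "(\<Prod>i<p. Gamma (b i)) * Gamma (b p) = (\<Prod>i<n. Gamma (a + real (c i)))"
      by (simp add: np b_def prod.lessThan_Suc)
    have "K * ((\<Prod>i<p. Gamma (b i)) * Gamma (b p) / Gamma ((\<Sum>i<p. b i) + b p) * 1 powr ((\<Sum>i<p. b i) + b p - 1))
        = Gamma (real n * a) / Gamma (real n * a + real (\<Sum>i<n. c i)) * (\<Prod>i<n. Gamma (a + real (c i)) / Gamma a)"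
      unfolding s pr K_def by (simp add: prod_dividef)
    then show ?thesis using Kpos
      by (simp add: ennreal_mult'[symmetric] del: of_nat_sum)
  qed
  finally show ?thesis .
qed

lemma gamma_scaled:
  fixes s r :: real
  assumes s: "0 < s" and r: "0 < r"
  shows "(\<integral>\<^sup>+l. ennreal (indicator {0..} l * (l powr (s - 1) * exp (- r * l))) \<partial>lborel) = ennreal (Gamma s / r powr s)"
proof -
  have "ennreal (Gamma s) = (\<integral>\<^sup>+t. ennreal (indicator {0..} t * t powr (s - 1) / exp t) \<partial>lborel)"
    using Gamma_conv_nn_integral_real[OF s] by simp
  also have "\<dots> = \<bar>r\<bar> * (\<integral>\<^sup>+l. ennreal (indicator {0..} (0 + r*l) * (0 + r*l) powr (s - 1) / exp (0 + r*l)) \<partial>lborel)"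
    by (rule nn_integral_real_affine) (use r in auto)
  also have "\<dots> = r * (\<integral>\<^sup>+l. ennreal (r powr (s - 1)) * ennreal (indicator {0..} l * (l powr (s - 1) * exp (- r * l))) \<partial>lborel)"
  proof -
    have "ennreal (indicator {0..} (0 + r*l) * (0 + r*l) powr (s - 1) / exp (0 + r*l))
        = ennreal (r powr (s - 1)) * ennreal (indicator {0..} l * (l powr (s - 1) * exp (- r * l)))" for l
    proof (cases "0 \<le> l")
      case True
      then show ?thesis using r
        by (simp add: ennreal_mult'[symmetric] powr_mult exp_minus field_simps zero_le_mult_iff)
    next
      case False
      then show ?thesis using r by (simp add: indicator_def zero_le_mult_iff)
    qed
    then show ?thesis using r by simp
  qed
  also have "\<dots> = r * ennreal (r powr (s - 1)) * (\<integral>\<^sup>+l. ennreal (indicator {0..} l * (l powr (s - 1) * exp (- r * l))) \<partial>lborel)"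
    by (subst nn_integral_cmult) (simp_all add: mult.assoc)
  finally have eq: "ennreal (Gamma s) = ennreal (r powr s) * (\<integral>\<^sup>+l. ennreal (indicator {0..} l * (l powr (s - 1) * exp (- r * l))) \<partial>lborel)"
    using r by (simp add: ennreal_mult'[symmetric] powr_mult_base)
  have "ennreal (Gamma s / r powr s) = ennreal (Gamma s) / ennreal (r powr s)"
    using r s by (simp add: divide_ennreal)
  also have "\<dots> = (\<integral>\<^sup>+l. ennreal (indicator {0..} l * (l powr (s - 1) * exp (- r * l))) \<partial>lborel)"
    unfolding eq using r by (subst mult.commute, subst ennreal_mult_divide_eq) auto
  finally show ?thesis by simp
qed

lemma gamma_moment:
  fixes sh r :: real and M :: nat
  assumes sh: "0 < sh" and r: "0 < r"
  shows "(\<integral>\<^sup>+l. ennreal (gamma_density sh r l * exp (- l) * l ^ M) \<partial>lborel)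
       = ennreal ((r / (r + 1)) powr sh * (Gamma (sh + real M) / Gamma sh / (r + 1) ^ M))"
proof -
  define K where "K = r powr sh / Gamma sh"
  have K: "0 \<le> K" unfolding K_def using sh by auto
  have "gamma_density sh r l * exp (- l) * l ^ M = K * (indicator {0..} l * (l powr (sh + real M - 1) * exp (- (r + 1) * l)))" for l
  proof (cases "0 < l")
    case True
    have e: "exp (- l) * exp (- (r * l)) = exp (- (r + 1) * l)"
      by (simp add: exp_add[symmetric] algebra_simps)
    have p: "l powr (sh - 1) * l ^ M = l powr (sh + real M - 1)"
      using True by (simp add: powr_realpow[symmetric] powr_add[symmetric] algebra_simps)
    have "gamma_density sh r l * exp (- l) * l ^ M = K * ((l powr (sh - 1) * l ^ M) * (exp (- l) * exp (- (r * l))))"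
      using True by (simp add: gamma_density_def K_def mult_ac)
    then show ?thesis unfolding e p using True by simp
  next
    case False
    then show ?thesis using sh by (cases "l = 0") (auto simp: gamma_density_def)
  qed
  then have "(\<integral>\<^sup>+l. ennreal (gamma_density sh r l * exp (- l) * l ^ M) \<partial>lborel)
      = (\<integral>\<^sup>+l. ennreal K * ennreal (indicator {0..} l * (l powr (sh + real M - 1) * exp (- (r + 1) * l))) \<partial>lborel)"
    using K by (simp add: ennreal_mult')
  also have "\<dots> = ennreal K * ennreal (Gamma (sh + real M) / (r + 1) powr (sh + real M))"
    by (subst nn_integral_cmult, measurable, subst gamma_scaled) (use sh r in \<open>auto simp: add_pos_nonneg\<close>)
  also have "\<dots> = ennreal ((r / (r + 1)) powr sh * (Gamma (sh + real M) / Gamma sh / (r + 1) ^ M))"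
  proof -
    have "K * (Gamma (sh + real M) / (r + 1) powr (sh + real M)) = (r / (r + 1)) powr sh * (Gamma (sh + real M) / Gamma sh / (r + 1) ^ M)"
      using r by (simp add: K_def powr_add powr_divide powr_realpow field_simps)
    then show ?thesis using K by (simp add: ennreal_mult'[symmetric])
  qed
  finally show ?thesis .
qed

lemma sum_dir_vec: "0 < n \<Longrightarrow> (\<Sum>i<n. dir_vec n x i) = 1"
proof -
  assume "0 < n"
  then obtain p where np: "n = Suc p" by (cases n) auto
  show ?thesis unfolding np by (simp add: sum.lessThan_Suc dir_vec_def)
qed

lemma prod_fiber:
  fixes f :: "nat \<Rightarrow> real" and z :: "nat \<Rightarrow> nat"
  assumes "\<forall>s<m. z s < T"
  shows "(\<Prod>s<m. f (z s)) = (\<Prod>k<T. f k ^ card {s. s < m \<and> z s = k})"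
proof -
  have "(\<Prod>s<m. f (z s)) = (\<Prod>k<T. \<Prod>s\<in>{s. s \<in> {..<m} \<and> z s = k}. f (z s))"
    by (rule prod.group[symmetric]) (use assms in auto)
  also have "\<dots> = (\<Prod>k<T. f k ^ card {s. s < m \<and> z s = k})"
  proof (rule prod.cong[OF refl])
    fix k
    have "(\<Prod>s\<in>{s. s \<in> {..<m} \<and> z s = k}. f (z s)) = (\<Prod>s\<in>{s. s \<in> {..<m} \<and> z s = k}. f k)"
      by (rule prod.cong) auto
    then show "(\<Prod>s\<in>{s. s \<in> {..<m} \<and> z s = k}. f (z s)) = f k ^ card {s. s < m \<and> z s = k}"
      by simp
  qed
  finally show ?thesis .
qed

lemma lik_factor:
  fixes phi psi :: "nat \<Rightarrow> nat \<Rightarrow> real" and lam :: "nat \<Rightarrow> real"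
  assumes I: "0 < I" and J: "0 < J" and T: "0 < T"
    and zT: "\<forall>i<I. \<forall>j<J. \<forall>s<m i j. z i j s < T"
    and sphi: "\<forall>k<T. \<forall>i<I. 0 < dir_vec I (phi k) i"
    and spsi: "\<forall>k<T. \<forall>j<J. 0 < dir_vec J (psi k) j"
    and slam: "\<forall>k<T. 0 < lam k"
  shows "depm_lik I J T m z phi psi lam =
     (\<Prod>i<I. \<Prod>j<J. 1 / fact (m i j)) *
     (\<Prod>k<T. exp (- lam k) * ((\<Prod>i<I. dir_vec I (phi k) i ^ (\<Sum>j<J. cnt m z i j k)) *
                          (\<Prod>j<J. dir_vec J (psi k) j ^ (\<Sum>i<I. cnt m z i j k)) *
                          lam k ^ (\<Sum>i<I. \<Sum>j<J. cnt m z i j k)))"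
proof -
  define w where "w i j k = dir_vec I (phi k) i * dir_vec J (psi k) j * lam k" for i j k
  define r where "r i j = (\<Sum>k<T. w i j k)" for i j
  have wpos: "0 < w i j k" if "i < I" "j < J" "k < T" for i j k
    using that sphi spsi slam by (simp add: w_def)
  have rpos: "0 < r i j" if "i < I" "j < J" for i j
    unfolding r_def using T that by (intro sum_pos) (auto intro: wpos)
  have step1: "poisson_prob (r i j) (m i j) * (\<Prod>s<m i j. w i j (z i j s) / r i j)
      = 1 / fact (m i j) * exp (- r i j) * (\<Prod>k<T. w i j k ^ cnt m z i j k)" if "i < I" "j < J" for i j
  proof -
    have "(\<Prod>s<m i j. w i j (z i j s) / r i j) = (\<Prod>s<m i j. w i j (z i j s)) / r i j ^ m i j"
      by (simp add: prod_dividef)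
    also have "(\<Prod>s<m i j. w i j (z i j s)) = (\<Prod>k<T. w i j k ^ cnt m z i j k)"
      unfolding cnt_def by (rule prod_fiber) (use zT that in auto)
    finally show ?thesis using rpos[OF that]
      by (simp add: poisson_prob_def)
  qed
  have lik: "depm_lik I J T m z phi psi lam = (\<Prod>i<I. \<Prod>j<J. 1 / fact (m i j) * exp (- r i j) * (\<Prod>k<T. w i j k ^ cnt m z i j k))"
    unfolding depm_lik_def Let_def w_def[symmetric] r_def[symmetric]
    by (intro prod.cong refl step1) auto
  also have "\<dots> = (\<Prod>i<I. \<Prod>j<J. 1 / fact (m i j)) * (\<Prod>i<I. \<Prod>j<J. exp (- r i j)) * (\<Prod>i<I. \<Prod>j<J. \<Prod>k<T. w i j k ^ cnt m z i j k)"
    by (simp only: prod.distrib)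
  also have "(\<Prod>i<I. \<Prod>j<J. exp (- r i j)) = (\<Prod>k<T. exp (- lam k))"
  proof -
    have "(\<Sum>i<I. \<Sum>j<J. r i j) = (\<Sum>k<T. lam k)"
    proof -
      have "(\<Sum>i<I. \<Sum>j<J. r i j) = (\<Sum>k<T. lam k * (\<Sum>i<I. dir_vec I (phi k) i) * (\<Sum>j<J. dir_vec J (psi k) j))"
        unfolding r_def w_def
        by (simp add: sum_distrib_left sum_distrib_right mult_ac sum.swap[of _ "{..<T}"])
      also have "\<dots> = (\<Sum>k<T. lam k)" using I J by (simp add: sum_dir_vec)
      finally show ?thesis .
    qed
    then show ?thesis
      by (simp add: exp_sum[symmetric] sum_negf)
  qed
  also have "(\<Prod>i<I. \<Prod>j<J. \<Prod>k<T. w i j k ^ cnt m z i j k) =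
       (\<Prod>k<T. (\<Prod>i<I. dir_vec I (phi k) i ^ (\<Sum>j<J. cnt m z i j k)) *
                (\<Prod>j<J. dir_vec J (psi k) j ^ (\<Sum>i<I. cnt m z i j k)) *
                lam k ^ (\<Sum>i<I. \<Sum>j<J. cnt m z i j k))"
  proof -
    have "(\<Prod>i<I. \<Prod>j<J. \<Prod>k<T. w i j k ^ cnt m z i j k) = (\<Prod>k<T. \<Prod>i<I. \<Prod>j<J. w i j k ^ cnt m z i j k)"
      by (simp add: prod.swap[of _ "{..<T}"])
    also have "\<dots> = (\<Prod>k<T. (\<Prod>i<I. \<Prod>j<J. dir_vec I (phi k) i ^ cnt m z i j k) *
                (\<Prod>i<I. \<Prod>j<J. dir_vec J (psi k) j ^ cnt m z i j k) *
                (\<Prod>i<I. \<Prod>j<J. lam k ^ cnt m z i j k))"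
      unfolding w_def by (simp add: power_mult_distrib prod.distrib)
    also have "\<dots> = (\<Prod>k<T. (\<Prod>i<I. dir_vec I (phi k) i ^ (\<Sum>j<J. cnt m z i j k)) *
                (\<Prod>j<J. dir_vec J (psi k) j ^ (\<Sum>i<I. cnt m z i j k)) *
                lam k ^ (\<Sum>i<I. \<Sum>j<J. cnt m z i j k))"
      by (simp add: power_sum prod.swap[of _ "{..<I}"])
    finally show ?thesis .
  qed
  finally show ?thesis by (simp add: prod.distrib mult_ac)
qed

definition Afun :: "nat \<Rightarrow> real \<Rightarrow> (nat \<Rightarrow> nat) \<Rightarrow> (nat \<Rightarrow> real) \<Rightarrow> real" where
  "Afun n a c x = dirichlet_density n a x * (\<Prod>i<n. dir_vec n x i ^ c i)"

definition Gfun :: "real \<Rightarrow> real \<Rightarrow> nat \<Rightarrow> real \<Rightarrow> real" where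
  "Gfun sh r M l = gamma_density sh r l * exp (- l) * l ^ M"

lemma dir_vec_meas[measurable]: "(\<lambda>x. dir_vec n x i) \<in> borel_measurable (PiM {..<n-1} (\<lambda>_. lborel))"
proof (cases "i < n - 1")
  case True
  then show ?thesis unfolding dir_vec_def by simp
next
  case False
  then show ?thesis unfolding dir_vec_def by simp
qed

lemma dd_eq: "dirichlet_density n a x = indicator (spx (n-1) 1) x * (Gamma (real n * a) / Gamma a ^ n * (\<Prod>i<n. dir_vec n x i powr (a - 1)))"
  by (simp add: dirichlet_density_def spx_def indicator_def)

lemma dd_meas[measurable]: "(\<lambda>x. dirichlet_density n a x) \<in> borel_measurable (PiM {..<n-1} (\<lambda>_. lborel))"
  unfolding dd_eq by measurable

lemma Afun_meas[measurable]: "Afun n a c \<in> borel_measurable (PiM {..<n-1} (\<lambda>_. lborel))"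
  unfolding Afun_def by measurable

lemma Gfun_meas[measurable]: "Gfun sh r M \<in> borel_measurable borel"
  unfolding Gfun_def gamma_density_def by measurable

lemma dd_nonneg: "0 < a \<Longrightarrow> 0 < n \<Longrightarrow> 0 \<le> dirichlet_density n a x"
  unfolding dirichlet_density_def by (auto intro!: divide_nonneg_nonneg prod_nonneg mult_nonneg_nonneg less_imp_le[OF Gamma_real_pos])

lemma dd_supp: "dirichlet_density n a x \<noteq> 0 \<Longrightarrow> 0 < n \<Longrightarrow> \<forall>i<n. 0 < dir_vec n x i"
  unfolding dirichlet_density_def dir_vec_def by (auto split: if_splits)

lemma Afun_nonneg: "0 < a \<Longrightarrow> 0 < n \<Longrightarrow> 0 \<le> Afun n a c x"
proof (cases "dirichlet_density n a x = 0")
  case False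
  assume "0 < a" "0 < n"
  then show ?thesis using dd_supp[OF False] dd_nonneg[of a n x] unfolding Afun_def
    by (intro mult_nonneg_nonneg prod_nonneg) auto
qed (auto simp: Afun_def)

lemma gd_nonneg: "0 < a \<Longrightarrow> 0 < b \<Longrightarrow> 0 \<le> gamma_density a b x"
  unfolding gamma_density_def by (auto intro!: divide_nonneg_nonneg mult_nonneg_nonneg)

lemma Gfun_nonneg: "0 < a \<Longrightarrow> 0 < b \<Longrightarrow> 0 \<le> Gfun a b M x"
  unfolding Gfun_def by (cases "0 < x") (auto simp: gamma_density_def intro!: divide_nonneg_nonneg mult_nonneg_nonneg)

lemma psf_PiM: "product_sigma_finite (\<lambda>_::nat. PiM {..<n::nat} (\<lambda>_. lborel::real measure))"
  unfolding product_sigma_finite_def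
  using product_sigma_finite.sigma_finite[OF psf_lborel, of "{..<n}"] by simp

lemma Afun_meas2: "(\<lambda>x. ennreal (Afun n a c x)) \<in> borel_measurable (PiM {..<n - Suc 0} (\<lambda>_. lborel))"
  using Afun_meas[of n a c] by simp

lemma pz: "k < (T::nat) \<Longrightarrow> f k = 0 \<Longrightarrow> (\<Prod>k<T. f k) = (0::real)"
  by (rule prod_zero) auto

lemma marginal_eq:
  fixes I J T :: nat and a1 a2 g0 c0 :: real
  assumes I: "0 < I" and J: "0 < J" and a1: "0 < a1" and a2: "0 < a2" and g0: "0 < g0" and c0: "0 < c0"
    and T: "0 < T" and zT: "\<forall>i<I. \<forall>j<J. \<forall>s<m i j. z i j s < T"
  shows "depm_marginal I J a1 a2 g0 c0 T m z = ennreal (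
     (\<Prod>i<I. \<Prod>j<J. 1 / fact (m i j)) *
     (\<Prod>k<T. Gamma (real I * a1) / Gamma (real I * a1 + real (\<Sum>i<I. \<Sum>j<J. cnt m z i j k)) *
              (\<Prod>i<I. Gamma (a1 + real (\<Sum>j<J. cnt m z i j k)) / Gamma a1)) *
     (\<Prod>k<T. Gamma (real J * a2) / Gamma (real J * a2 + real (\<Sum>j<J. \<Sum>i<I. cnt m z i j k)) *
              (\<Prod>j<J. Gamma (a2 + real (\<Sum>i<I. cnt m z i j k)) / Gamma a2)) *
     (\<Prod>k<T. (c0 / (c0 + 1)) powr (g0 / real T) * (Gamma (g0 / real T + real (\<Sum>i<I. \<Sum>j<J. cnt m z i j k)) / Gamma (g0 / real T) / (c0 + 1) ^ (\<Sum>i<I. \<Sum>j<J. cnt m z i j k))))"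
proof -
  define MI where "MI k i = (\<Sum>j<J. cnt m z i j k)" for k i
  define MJ where "MJ k j = (\<Sum>i<I. cnt m z i j k)" for k j
  define MK where "MK k = (\<Sum>i<I. \<Sum>j<J. cnt m z i j k)" for k
  define C where "C = (\<Prod>i<I. \<Prod>j<J. 1 / fact (m i j) :: real)"
  define sh where "sh = g0 / real T"
  have sh: "0 < sh" unfolding sh_def using g0 T by simp
  define PA where "PA phi = (\<Prod>k<T. Afun I a1 (MI k) (phi k))" for phi
  define PB where "PB psi = (\<Prod>k<T. Afun J a2 (MJ k) (psi k))" for psi
  define PG where "PG lam = (\<Prod>k<T. Gfun sh c0 (MK k) (lam k))" for lam
  have C: "0 \<le> C" unfolding C_def by (intro prod_nonneg) auto
  have PA: "0 \<le> PA phi" for phi unfolding PA_def using a1 I by (intro prod_nonneg Afun_nonneg) auto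
  have PB: "0 \<le> PB psi" for psi unfolding PB_def using a2 J by (intro prod_nonneg Afun_nonneg) auto
  have PG: "0 \<le> PG lam" for lam unfolding PG_def using sh c0 by (intro prod_nonneg Gfun_nonneg) auto
  have pw: "(\<Prod>k<T. dirichlet_density I a1 (phi k)) * (\<Prod>k<T. dirichlet_density J a2 (psi k)) *
            (\<Prod>k<T. gamma_density sh c0 (lam k)) * depm_lik I J T m z phi psi lam
          = C * PA phi * PB psi * PG lam" for phi psi lam
  proof (cases "\<forall>k<T. dirichlet_density I a1 (phi k) \<noteq> 0 \<and> dirichlet_density J a2 (psi k) \<noteq> 0 \<and> gamma_density sh c0 (lam k) \<noteq> 0")
    case True
    have s1: "\<forall>k<T. \<forall>i<I. 0 < dir_vec I (phi k) i" using True dd_supp I by blast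
    have s2: "\<forall>k<T. \<forall>j<J. 0 < dir_vec J (psi k) j" using True dd_supp J by blast
    have s3: "\<forall>k<T. 0 < lam k" using True by (auto simp: gamma_density_def split: if_splits)
    show ?thesis
      unfolding lik_factor[OF I J T zT s1 s2 s3] PA_def PB_def PG_def Afun_def Gfun_def C_def
        MI_def MJ_def MK_def
      by (simp add: prod.distrib mult_ac)
  next
    case False
    then obtain k where k: "k < T" and
      "dirichlet_density I a1 (phi k) = 0 \<or> dirichlet_density J a2 (psi k) = 0 \<or> gamma_density sh c0 (lam k) = 0"
      by auto
    then consider "dirichlet_density I a1 (phi k) = 0" | "dirichlet_density J a2 (psi k) = 0" | "gamma_density sh c0 (lam k) = 0"
      by blast
    then show ?thesis
    proof cases
      case 1
      have "(\<Prod>k<T. dirichlet_density I a1 (phi k)) = 0" "PA phi = 0"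
        unfolding PA_def Afun_def by (rule pz[OF k], use 1 in simp)+
      then show ?thesis by simp
    next
      case 2
      have "(\<Prod>k<T. dirichlet_density J a2 (psi k)) = 0" "PB psi = 0"
        unfolding PB_def Afun_def by (rule pz[OF k], use 2 in simp)+
      then show ?thesis by simp
    next
      case 3
      have "(\<Prod>k<T. gamma_density sh c0 (lam k)) = 0" "PG lam = 0"
        unfolding PG_def Gfun_def by (rule pz[OF k], use 3 in simp)+
      then show ?thesis by simp
    qed
  qed
  interpret L: product_sigma_finite "\<lambda>_::nat. lborel::real measure" by (rule psf_lborel)
  interpret PJ: product_sigma_finite "\<lambda>_::nat. PiM {..<J-1} (\<lambda>_. lborel::real measure)" by (rule psf_PiM)
  interpret PI: product_sigma_finite "\<lambda>_::nat. PiM {..<I-1} (\<lambda>_. lborel::real measure)" by (rule psf_PiM)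
  have iG: "(\<integral>\<^sup>+lam. ennreal (PG lam) \<partial>PiM {..<T} (\<lambda>_. lborel)) =
     ennreal (\<Prod>k<T. (c0 / (c0 + 1)) powr sh * (Gamma (sh + real (MK k)) / Gamma sh / (c0 + 1) ^ MK k))"
  proof -
    have "(\<integral>\<^sup>+lam. ennreal (PG lam) \<partial>PiM {..<T} (\<lambda>_. lborel)) = (\<integral>\<^sup>+lam. (\<Prod>k<T. ennreal (Gfun sh c0 (MK k) (lam k))) \<partial>PiM {..<T} (\<lambda>_. lborel))"
      unfolding PG_def using sh c0 by (subst prod_ennreal) (auto intro!: Gfun_nonneg)
    also have "\<dots> = (\<Prod>k<T. \<integral>\<^sup>+l. ennreal (Gfun sh c0 (MK k) l) \<partial>lborel)"
      by (rule L.product_nn_integral_prod) auto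
    also have "\<dots> = (\<Prod>k<T. ennreal ((c0 / (c0 + 1)) powr sh * (Gamma (sh + real (MK k)) / Gamma sh / (c0 + 1) ^ MK k)))"
      unfolding Gfun_def using gamma_moment[OF sh c0] by simp
    also have "\<dots> = ennreal (\<Prod>k<T. (c0 / (c0 + 1)) powr sh * (Gamma (sh + real (MK k)) / Gamma sh / (c0 + 1) ^ MK k))"
      using sh c0 by (subst prod_ennreal) (auto intro!: mult_nonneg_nonneg divide_nonneg_nonneg less_imp_le[OF Gamma_real_pos])
    finally show ?thesis .
  qed
  have iA: "(\<integral>\<^sup>+phi. ennreal (PA phi) \<partial>PiM {..<T} (\<lambda>_. PiM {..<I-1} (\<lambda>_. lborel))) =
     ennreal (\<Prod>k<T. Gamma (real I * a1) / Gamma (real I * a1 + real (\<Sum>i<I. MI k i)) * (\<Prod>i<I. Gamma (a1 + real (MI k i)) / Gamma a1))"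
  proof -
    have "(\<integral>\<^sup>+phi. ennreal (PA phi) \<partial>PiM {..<T} (\<lambda>_. PiM {..<I-1} (\<lambda>_. lborel))) = (\<integral>\<^sup>+phi. (\<Prod>k<T. ennreal (Afun I a1 (MI k) (phi k))) \<partial>PiM {..<T} (\<lambda>_. PiM {..<I-1} (\<lambda>_. lborel)))"
      unfolding PA_def using a1 I by (subst prod_ennreal) (auto intro!: Afun_nonneg)
    also have "\<dots> = (\<Prod>k<T. \<integral>\<^sup>+x. ennreal (Afun I a1 (MI k) x) \<partial>PiM {..<I-1} (\<lambda>_. lborel))"
      by (rule PI.product_nn_integral_prod) (auto intro: Afun_meas2)
    also have "\<dots> = (\<Prod>k<T. ennreal (Gamma (real I * a1) / Gamma (real I * a1 + real (\<Sum>i<I. MI k i)) * (\<Prod>i<I. Gamma (a1 + real (MI k i)) / Gamma a1)))"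
      unfolding Afun_def using dirichlet_moment[OF I a1] by simp
    also have "\<dots> = ennreal (\<Prod>k<T. Gamma (real I * a1) / Gamma (real I * a1 + real (\<Sum>i<I. MI k i)) * (\<Prod>i<I. Gamma (a1 + real (MI k i)) / Gamma a1))"
      using a1 I by (subst prod_ennreal) (auto intro!: mult_nonneg_nonneg divide_nonneg_nonneg prod_nonneg less_imp_le[OF Gamma_real_pos] add_pos_nonneg sum_nonneg)
    finally show ?thesis .
  qed
  have iB: "(\<integral>\<^sup>+psi. ennreal (PB psi) \<partial>PiM {..<T} (\<lambda>_. PiM {..<J-1} (\<lambda>_. lborel))) =
     ennreal (\<Prod>k<T. Gamma (real J * a2) / Gamma (real J * a2 + real (\<Sum>j<J. MJ k j)) * (\<Prod>j<J. Gamma (a2 + real (MJ k j)) / Gamma a2))"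
  proof -
    have "(\<integral>\<^sup>+psi. ennreal (PB psi) \<partial>PiM {..<T} (\<lambda>_. PiM {..<J-1} (\<lambda>_. lborel))) = (\<integral>\<^sup>+psi. (\<Prod>k<T. ennreal (Afun J a2 (MJ k) (psi k))) \<partial>PiM {..<T} (\<lambda>_. PiM {..<J-1} (\<lambda>_. lborel)))"
      unfolding PB_def using a2 J by (subst prod_ennreal) (auto intro!: Afun_nonneg)
    also have "\<dots> = (\<Prod>k<T. \<integral>\<^sup>+x. ennreal (Afun J a2 (MJ k) x) \<partial>PiM {..<J-1} (\<lambda>_. lborel))"
      by (rule PJ.product_nn_integral_prod) (auto intro: Afun_meas2)
    also have "\<dots> = (\<Prod>k<T. ennreal (Gamma (real J * a2) / Gamma (real J * a2 + real (\<Sum>j<J. MJ k j)) * (\<Prod>j<J. Gamma (a2 + real (MJ k j)) / Gamma a2)))"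
      unfolding Afun_def using dirichlet_moment[OF J a2] by simp
    also have "\<dots> = ennreal (\<Prod>k<T. Gamma (real J * a2) / Gamma (real J * a2 + real (\<Sum>j<J. MJ k j)) * (\<Prod>j<J. Gamma (a2 + real (MJ k j)) / Gamma a2))"
      using a2 J by (subst prod_ennreal) (auto intro!: mult_nonneg_nonneg divide_nonneg_nonneg prod_nonneg less_imp_le[OF Gamma_real_pos] add_pos_nonneg sum_nonneg)
    finally show ?thesis .
  qed
  have "depm_marginal I J a1 a2 g0 c0 T m z =
     (\<integral>\<^sup>+phi. \<integral>\<^sup>+psi. \<integral>\<^sup>+lam. ennreal (C * PA phi) * ennreal (PB psi) * ennreal (PG lam)
        \<partial>PiM {..<T} (\<lambda>_. lborel) \<partial>PiM {..<T} (\<lambda>_. PiM {..<J-1} (\<lambda>_. lborel)) \<partial>PiM {..<T} (\<lambda>_. PiM {..<I-1} (\<lambda>_. lborel)))"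
    unfolding depm_marginal_def using zT sh_def[symmetric] pw C PA PB PG
    by (simp add: ennreal_mult'[symmetric] mult_nonneg_nonneg mult.assoc)
  also have "\<dots> = (\<integral>\<^sup>+phi. \<integral>\<^sup>+psi. ennreal (C * PA phi) * ennreal (PB psi) * (\<integral>\<^sup>+lam. ennreal (PG lam) \<partial>PiM {..<T} (\<lambda>_. lborel))
        \<partial>PiM {..<T} (\<lambda>_. PiM {..<J-1} (\<lambda>_. lborel)) \<partial>PiM {..<T} (\<lambda>_. PiM {..<I-1} (\<lambda>_. lborel)))"
    by (intro nn_integral_cong nn_integral_cmult) (simp add: PG_def)
  also have "\<dots> = (\<integral>\<^sup>+phi. ennreal (C * PA phi) * (\<integral>\<^sup>+psi. ennreal (PB psi) \<partial>PiM {..<T} (\<lambda>_. PiM {..<J-1} (\<lambda>_. lborel))) * (\<integral>\<^sup>+lam. ennreal (PG lam) \<partial>PiM {..<T} (\<lambda>_. lborel))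
        \<partial>PiM {..<T} (\<lambda>_. PiM {..<I-1} (\<lambda>_. lborel)))"
  proof (rule nn_integral_cong)
    fix phi
    have m: "(\<lambda>psi. ennreal (PB psi)) \<in> borel_measurable (PiM {..<T} (\<lambda>_. PiM {..<J-1} (\<lambda>_. lborel)))"
      unfolding PB_def by measurable
    show "(\<integral>\<^sup>+psi. ennreal (C * PA phi) * ennreal (PB psi) * (\<integral>\<^sup>+lam. ennreal (PG lam) \<partial>PiM {..<T} (\<lambda>_. lborel)) \<partial>PiM {..<T} (\<lambda>_. PiM {..<J-1} (\<lambda>_. lborel)))
      = ennreal (C * PA phi) * (\<integral>\<^sup>+psi. ennreal (PB psi) \<partial>PiM {..<T} (\<lambda>_. PiM {..<J-1} (\<lambda>_. lborel))) * (\<integral>\<^sup>+lam. ennreal (PG lam) \<partial>PiM {..<T} (\<lambda>_. lborel))"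
      using m by (simp add: nn_integral_multc nn_integral_cmult)
  qed
  also have "\<dots> = ennreal C * (\<integral>\<^sup>+phi. ennreal (PA phi) \<partial>PiM {..<T} (\<lambda>_. PiM {..<I-1} (\<lambda>_. lborel))) * (\<integral>\<^sup>+psi. ennreal (PB psi) \<partial>PiM {..<T} (\<lambda>_. PiM {..<J-1} (\<lambda>_. lborel))) * (\<integral>\<^sup>+lam. ennreal (PG lam) \<partial>PiM {..<T} (\<lambda>_. lborel))"
  proof -
    have m: "(\<lambda>phi. ennreal (PA phi)) \<in> borel_measurable (PiM {..<T} (\<lambda>_. PiM {..<I-1} (\<lambda>_. lborel)))"
      unfolding PA_def by measurable
    let ?X = "(\<integral>\<^sup>+psi. ennreal (PB psi) \<partial>PiM {..<T} (\<lambda>_. PiM {..<J-1} (\<lambda>_. lborel))) * (\<integral>\<^sup>+lam. ennreal (PG lam) \<partial>PiM {..<T} (\<lambda>_. lborel))"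
    have "(\<integral>\<^sup>+phi. ennreal (C * PA phi) * (\<integral>\<^sup>+psi. ennreal (PB psi) \<partial>PiM {..<T} (\<lambda>_. PiM {..<J-1} (\<lambda>_. lborel))) * (\<integral>\<^sup>+lam. ennreal (PG lam) \<partial>PiM {..<T} (\<lambda>_. lborel))
        \<partial>PiM {..<T} (\<lambda>_. PiM {..<I-1} (\<lambda>_. lborel)))
       = (\<integral>\<^sup>+phi. ennreal C * (ennreal (PA phi) * ?X) \<partial>PiM {..<T} (\<lambda>_. PiM {..<I-1} (\<lambda>_. lborel)))"
      using C PA by (simp add: ennreal_mult' mult.assoc)
    also have "\<dots> = ennreal C * (\<integral>\<^sup>+phi. ennreal (PA phi) * ?X \<partial>PiM {..<T} (\<lambda>_. PiM {..<I-1} (\<lambda>_. lborel)))"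
      by (rule nn_integral_cmult) (use m in measurable)
    also have "\<dots> = ennreal C * ((\<integral>\<^sup>+phi. ennreal (PA phi) \<partial>PiM {..<T} (\<lambda>_. PiM {..<I-1} (\<lambda>_. lborel))) * ?X)"
      by (subst nn_integral_multc[OF m]) rule
    finally show ?thesis by (simp add: mult.assoc)
  qed
  also have "\<dots> = ennreal (C *
     (\<Prod>k<T. Gamma (real I * a1) / Gamma (real I * a1 + real (\<Sum>i<I. MI k i)) * (\<Prod>i<I. Gamma (a1 + real (MI k i)) / Gamma a1)) *
     (\<Prod>k<T. Gamma (real J * a2) / Gamma (real J * a2 + real (\<Sum>j<J. MJ k j)) * (\<Prod>j<J. Gamma (a2 + real (MJ k j)) / Gamma a2)) *
     (\<Prod>k<T. (c0 / (c0 + 1)) powr sh * (Gamma (sh + real (MK k)) / Gamma sh / (c0 + 1) ^ MK k)))"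
    unfolding iA iB iG using C a1 a2 I J sh c0
    by (simp add: ennreal_mult'[symmetric] mult_nonneg_nonneg prod_nonneg divide_nonneg_nonneg less_imp_le[OF Gamma_real_pos] add_pos_nonneg sum_nonneg)
  finally show ?thesis
    unfolding C_def MI_def MJ_def MK_def sh_def .
qed

lemma pos_not_nonpos_Int: "0 < (x::real) \<Longrightarrow> x \<notin> \<int>\<^sub>\<le>\<^sub>0"
  using nonpos_Ints_nonpos by fastforce

lemma fact_ratio: "k \<le> T \<Longrightarrow> (fact T / fact (T - k) :: real) = (\<Prod>j<k. real (T - j))"
proof (induction k)
  case 0
  then show ?case by simp
next
  case (Suc k)
  then have "T - k = Suc (T - Suc k)" by simp
  then have e: "(fact (T - k) :: real) = real (T - k) * fact (T - Suc k)"
    by (metis fact_Suc of_nat_fact of_nat_mult)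
  have "(fact T / fact (T - Suc k) :: real) = fact T / fact (T - k) * (fact (T - k) / fact (T - Suc k))"
    by simp
  also have "\<dots> = (\<Prod>j<k. real (T - j)) * real (T - k)"
    using Suc by (simp add: e)
  finally show ?case by (simp add: prod.lessThan_Suc)
qed

lemma Gamma_lim:
  fixes g :: real and M :: nat
  assumes "0 < g" "0 < M"
  shows "((\<lambda>T::nat. Gamma (g / real T + real M)) \<longlongrightarrow> Gamma (real M)) at_top"
proof -
  have c: "isCont Gamma (real M)"
    using isCont_Gamma[where f="\<lambda>x. x" and z="real M"] assms by (simp add: of_nat_in_nonpos_Ints_iff)
  have "((\<lambda>T::nat. g / real T + real M) \<longlongrightarrow> 0 + real M) at_top"
    by (intro tendsto_intros tendsto_divide_0[OF tendsto_const] filterlim_real_sequentially)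
  then show ?thesis using isCont_tendsto_compose[OF c] by simp
qed

lemma key_limit:
  fixes g c :: real and Ks :: "nat set" and M :: "nat \<Rightarrow> nat"
  assumes g: "0 < g" and c: "0 < c" and fin: "finite Ks" and M: "\<forall>k\<in>Ks. 0 < M k"
  shows "((\<lambda>T. fact T / fact (T - card Ks) * (\<Prod>k\<in>Ks. Gamma (g / real T + real (M k)) / Gamma (g / real T) / (c + 1) ^ M k))
          \<longlongrightarrow> g ^ card Ks * (\<Prod>k\<in>Ks. Gamma (real (M k)) / (c + 1) ^ M k)) at_top"
proof -
  define K where "K = card Ks"
  let ?f = "\<lambda>T::nat. (\<Prod>j<K. (real T - real j) / real T) * (\<Prod>k\<in>Ks. g * Gamma (g / real T + real (M k)) / Gamma (g / real T + 1) / (c + 1) ^ M k)"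
  have ev: "eventually (\<lambda>T. ?f T = fact T / fact (T - K) * (\<Prod>k\<in>Ks. Gamma (g / real T + real (M k)) / Gamma (g / real T) / (c + 1) ^ M k)) at_top"
    using eventually_ge_at_top[of "Suc K"]
  proof eventually_elim
    case (elim T)
    then have T: "0 < T" "K \<le> T" by auto
    have g1: "Gamma (g / real T + 1) = g / real T * Gamma (g / real T)"
      using T g by (intro Gamma_plus1 pos_not_nonpos_Int) simp
    have gp: "0 < Gamma (g / real T)" using T g by simp
    have "(\<Prod>j<K. (real T - real j) / real T) = (\<Prod>j<K. real (T - j)) / real T ^ K"
      using T by (simp add: prod_dividef of_nat_diff)
    also have "\<dots> = fact T / fact (T - K) / real T ^ K" using fact_ratio[OF T(2)] by simp
    finally have A: "(\<Prod>j<K. (real T - real j) / real T) = fact T / fact (T - K) / real T ^ K" .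
    have B: "(\<Prod>k\<in>Ks. g * Gamma (g / real T + real (M k)) / Gamma (g / real T + 1) / (c + 1) ^ M k)
        = real T ^ K * (\<Prod>k\<in>Ks. Gamma (g / real T + real (M k)) / Gamma (g / real T) / (c + 1) ^ M k)"
    proof -
      have "(\<Prod>k\<in>Ks. g * Gamma (g / real T + real (M k)) / Gamma (g / real T + 1) / (c + 1) ^ M k)
          = (\<Prod>k\<in>Ks. real T * (Gamma (g / real T + real (M k)) / Gamma (g / real T) / (c + 1) ^ M k))"
        using T g gp by (intro prod.cong refl) (simp only: g1, simp add: field_simps)
      also have "\<dots> = real T ^ K * (\<Prod>k\<in>Ks. Gamma (g / real T + real (M k)) / Gamma (g / real T) / (c + 1) ^ M k)"
        by (simp only: prod.distrib prod_constant K_def)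
      finally show ?thesis .
    qed
    show ?case unfolding A B using T by simp
  qed
  have "(?f \<longlongrightarrow> (\<Prod>j<K. 1) * (\<Prod>k\<in>Ks. g * Gamma (real (M k)) / 1 / (c + 1) ^ M k)) at_top"
  proof (intro tendsto_mult tendsto_prod tendsto_divide tendsto_const)
    fix j assume "j \<in> {..<K}"
    have "((\<lambda>T::nat. 1 - real j / real T) \<longlongrightarrow> 1 - 0) at_top"
      by (intro tendsto_intros tendsto_divide_0[OF tendsto_const] filterlim_real_sequentially)
    moreover have "eventually (\<lambda>T. 1 - real j / real T = (real T - real j) / real T) at_top"
      using eventually_gt_at_top[of 0] by eventually_elim (simp add: field_simps)
    ultimately show "((\<lambda>T::nat. (real T - real j) / real T) \<longlongrightarrow> 1) at_top"
      using tendsto_cong by fastforce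
  next
    fix k assume "k \<in> Ks"
    then show "((\<lambda>T::nat. Gamma (g / real T + real (M k))) \<longlongrightarrow> Gamma (real (M k))) at_top"
      using Gamma_lim[OF g, of "M k"] M by auto
  next
    show "((\<lambda>T::nat. Gamma (g / real T + 1)) \<longlongrightarrow> 1) at_top"
      using Gamma_lim[OF g, of 1] by simp
  qed (use c in auto)
  moreover have "(\<Prod>j<K. 1) * (\<Prod>k\<in>Ks. g * Gamma (real (M k)) / 1 / (c + 1) ^ M k) = g ^ card Ks * (\<Prod>k\<in>Ks. Gamma (real (M k)) / (c + 1) ^ M k)"
  proof -
    have "(\<Prod>k\<in>Ks. g * Gamma (real (M k)) / 1 / (c + 1) ^ M k) = (\<Prod>k\<in>Ks. g * (Gamma (real (M k)) / (c + 1) ^ M k))"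
      by simp
    also have "\<dots> = g ^ card Ks * (\<Prod>k\<in>Ks. Gamma (real (M k)) / (c + 1) ^ M k)"
      by (simp only: prod.distrib prod_constant)
    finally show ?thesis by simp
  qed
  ultimately have "(?f \<longlongrightarrow> g ^ card Ks * (\<Prod>k\<in>Ks. Gamma (real (M k)) / (c + 1) ^ M k)) at_top"
    by simp
  then show ?thesis unfolding K_def[symmetric]
    using tendsto_cong[OF ev] by simp
qed

theorem theorem4:
  fixes I J :: nat and a1 a2 g0 c0 :: real
    and m :: "nat \<Rightarrow> nat \<Rightarrow> nat" and z :: "nat \<Rightarrow> nat \<Rightarrow> nat \<Rightarrow> nat"
  assumes "0 < I" "0 < J" "0 < a1" "0 < a2" "0 < g0" "0 < c0"
  defines "Ks \<equiv> occupied I J m z"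
    and "Kp \<equiv> card (occupied I J m z)"
    and "Mi \<equiv> (\<lambda>i k. \<Sum>j<J. cnt m z i j k)"
    and "Mj \<equiv> (\<lambda>j k. \<Sum>i<I. cnt m z i j k)"
    and "Mk \<equiv> (\<lambda>k. \<Sum>i<I. \<Sum>j<J. cnt m z i j k)"
  shows "((\<lambda>T. ennreal (fact T / fact (T - Kp)) * depm_marginal I J a1 a2 g0 c0 T m z)
          \<longlongrightarrow> ennreal (
            (\<Prod>i<I. \<Prod>j<J. 1 / fact (m i j)) *
            (\<Prod>k\<in>Ks. Gamma (real I * a1) / Gamma (real I * a1 + real (Mk k)) *
                        (\<Prod>i<I. Gamma (a1 + real (Mi i k)) / Gamma a1)) *
            (\<Prod>k\<in>Ks. Gamma (real J * a2) / Gamma (real J * a2 + real (Mk k)) *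
                        (\<Prod>j<J. Gamma (a2 + real (Mj j k)) / Gamma a2)) *
            (g0 ^ Kp * (c0 / (c0 + 1)) powr g0 *
             (\<Prod>k\<in>Ks. Gamma (real (Mk k)) / (c0 + 1) ^ Mk k)))) at_top"
proof -
  note I = assms(1) and J = assms(2) and a1 = assms(3) and a2 = assms(4) and g0 = assms(5) and c0 = assms(6)
  have Ks_sub: "Ks \<subseteq> (\<Union>i<I. \<Union>j<J. z i j ` {..<m i j})"
    unfolding Ks_def occupied_def by auto
  have finKs: "finite Ks" by (rule finite_subset[OF Ks_sub]) auto
  obtain N where N: "Ks \<subseteq> {..<N}" using finite_nat_bounded[OF finKs] by blast
  have cnt0: "cnt m z i j k = 0" if "k \<notin> Ks" "i < I" "j < J" for i j k
    using that unfolding cnt_def Ks_def occupied_def by auto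
  have Mk0: "Mk k = 0" "\<forall>i<I. Mi i k = 0" "\<forall>j<J. Mj j k = 0" if "k \<notin> Ks" for k
    using cnt0[OF that] by (auto simp: Mk_def Mi_def Mj_def)
  have Mkpos: "\<forall>k\<in>Ks. 0 < Mk k"
  proof
    fix k assume "k \<in> Ks"
    then obtain i j s where ijs: "i < I" "j < J" "s < m i j" "z i j s = k"
      unfolding Ks_def occupied_def by auto
    have "0 < cnt m z i j k" unfolding cnt_def using ijs
      by (subst card_gt_0_iff) auto
    also have "cnt m z i j k \<le> (\<Sum>j<J. cnt m z i j k)"
      by (rule member_le_sum) (use ijs in auto)
    also have "\<dots> \<le> (\<Sum>i<I. \<Sum>j<J. cnt m z i j k)"
      by (rule member_le_sum[where f="\<lambda>i. \<Sum>j<J. cnt m z i j k"]) (use ijs in auto)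
    finally show "0 < Mk k" by (simp add: Mk_def)
  qed
  define C where "C = (\<Prod>i<I. \<Prod>j<J. 1 / fact (m i j) :: real)"
  define A where "A k = Gamma (real I * a1) / Gamma (real I * a1 + real (\<Sum>i<I. \<Sum>j<J. cnt m z i j k)) *
              (\<Prod>i<I. Gamma (a1 + real (\<Sum>j<J. cnt m z i j k)) / Gamma a1)" for k
  define B where "B k = Gamma (real J * a2) / Gamma (real J * a2 + real (\<Sum>j<J. \<Sum>i<I. cnt m z i j k)) *
              (\<Prod>j<J. Gamma (a2 + real (\<Sum>i<I. cnt m z i j k)) / Gamma a2)" for k
  define q where "q = c0 / (c0 + 1)"
  define R where "R T k = Gamma (g0 / real T + real (Mk k)) / Gamma (g0 / real T) / (c0 + 1) ^ Mk k" for T k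
  define f where "f T = fact T / fact (T - Kp) * (\<Prod>k\<in>Ks. R T k)" for T
  have Ia: "0 < real I * a1" and Ja: "0 < real J * a2" using I J a1 a2 by auto
  have A1: "A k = 1" if "k \<notin> Ks" for k
    using cnt0[OF that] Gamma_real_pos[OF a1] Gamma_real_pos[OF Ia] by (simp add: A_def)
  have B1: "B k = 1" if "k \<notin> Ks" for k
    using cnt0[OF that] Gamma_real_pos[OF a2] Gamma_real_pos[OF Ja] by (simp add: B_def)
  have R1: "R T k = 1" if "k \<notin> Ks" "0 < T" for T k
  proof -
    have "0 < g0 / real T" using g0 that(2) by simp
    from Gamma_real_pos[OF this] show ?thesis using Mk0(1)[OF that(1)] by (simp add: R_def)
  qed
  have Bswap: "B k = Gamma (real J * a2) / Gamma (real J * a2 + real (Mk k)) * (\<Prod>j<J. Gamma (a2 + real (Mj j k)) / Gamma a2)" for k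
    unfolding B_def Mk_def Mj_def by (simp add: sum.swap[of _ "{..<J}"])
  have Aeq: "A k = Gamma (real I * a1) / Gamma (real I * a1 + real (Mk k)) * (\<Prod>i<I. Gamma (a1 + real (Mi i k)) / Gamma a1)" for k
    unfolding A_def Mk_def Mi_def by simp
  have ev: "eventually (\<lambda>T. ennreal (fact T / fact (T - Kp)) * depm_marginal I J a1 a2 g0 c0 T m z
              = ennreal (C * (\<Prod>k\<in>Ks. A k) * (\<Prod>k\<in>Ks. B k) * q powr g0 * f T)) at_top"
    using eventually_ge_at_top[of "max N 1"]
  proof eventually_elim
    case (elim T)
    then have T: "0 < T" and NT: "Ks \<subseteq> {..<T}" using N by auto
    have zT: "\<forall>i<I. \<forall>j<J. \<forall>s<m i j. z i j s < T"
      using NT unfolding Ks_def occupied_def by blast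
    have pA: "(\<Prod>k<T. A k) = (\<Prod>k\<in>Ks. A k)"
      by (rule prod.mono_neutral_right) (use NT A1 in auto)
    have pB: "(\<Prod>k<T. B k) = (\<Prod>k\<in>Ks. B k)"
      by (rule prod.mono_neutral_right) (use NT B1 in auto)
    have pR: "(\<Prod>k<T. R T k) = (\<Prod>k\<in>Ks. R T k)"
      by (rule prod.mono_neutral_right) (use NT R1 T in auto)
    have pG: "(\<Prod>k<T. q powr (g0 / real T) * R T k) = q powr g0 * (\<Prod>k\<in>Ks. R T k)"
    proof -
      have "(\<Prod>k<T. q powr (g0 / real T) * R T k) = (q powr (g0 / real T)) ^ T * (\<Prod>k<T. R T k)"
        by (simp add: prod.distrib)
      also have "(q powr (g0 / real T)) ^ T = q powr g0"
        using T c0 by (simp add: q_def powr_realpow[symmetric] powr_powr)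
      finally show ?thesis using pR by simp
    qed
    have me: "depm_marginal I J a1 a2 g0 c0 T m z = ennreal (C * (\<Prod>k<T. A k) * (\<Prod>k<T. B k) * (\<Prod>k<T. q powr (g0 / real T) * R T k))"
      unfolding marginal_eq[OF I J a1 a2 g0 c0 T zT] C_def A_def B_def q_def R_def Mk_def ..
    have fr: "0 \<le> (fact T / fact (T - Kp) :: real)" by simp
    show ?case unfolding me pA pB pG f_def using fr
      by (simp add: ennreal_mult'[symmetric] mult_ac)
  qed
  have KpKs: "Kp = card Ks" unfolding Kp_def Ks_def ..
  have lim: "(f \<longlongrightarrow> g0 ^ Kp * (\<Prod>k\<in>Ks. Gamma (real (Mk k)) / (c0 + 1) ^ Mk k)) at_top"
    unfolding f_def R_def KpKs by (rule key_limit[OF g0 c0 finKs Mkpos])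
  have lim2: "((\<lambda>T. ennreal (C * (\<Prod>k\<in>Ks. A k) * (\<Prod>k\<in>Ks. B k) * q powr g0 * f T)) \<longlongrightarrow>
      ennreal (C * (\<Prod>k\<in>Ks. A k) * (\<Prod>k\<in>Ks. B k) * q powr g0 * (g0 ^ Kp * (\<Prod>k\<in>Ks. Gamma (real (Mk k)) / (c0 + 1) ^ Mk k)))) at_top"
    by (intro tendsto_ennrealI tendsto_mult_left lim)
  have eqv: "C * (\<Prod>k\<in>Ks. A k) * (\<Prod>k\<in>Ks. B k) * q powr g0 * (g0 ^ Kp * (\<Prod>k\<in>Ks. Gamma (real (Mk k)) / (c0 + 1) ^ Mk k))
     = (\<Prod>i<I. \<Prod>j<J. 1 / fact (m i j)) *
            (\<Prod>k\<in>Ks. Gamma (real I * a1) / Gamma (real I * a1 + real (Mk k)) *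
                        (\<Prod>i<I. Gamma (a1 + real (Mi i k)) / Gamma a1)) *
            (\<Prod>k\<in>Ks. Gamma (real J * a2) / Gamma (real J * a2 + real (Mk k)) *
                        (\<Prod>j<J. Gamma (a2 + real (Mj j k)) / Gamma a2)) *
            (g0 ^ Kp * (c0 / (c0 + 1)) powr g0 *
             (\<Prod>k\<in>Ks. Gamma (real (Mk k)) / (c0 + 1) ^ Mk k))"
    unfolding Aeq Bswap C_def q_def by (simp only: mult_ac)
  show ?thesis
    using tendsto_cong[OF ev] lim2 unfolding eqv by simp
qed
end
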